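(* Let $W=\{w_1,\dots,w_n\}$, $F=\{f_1,\dots,f_m\}$, let $\succcurlyeq$ be a preference profile and $\bm r=(r_1,\dots,r_{n+m})$ a ranking of $W\cup F$. If the tensors $\mathbf P_W,\mathbf P_F$ and the matrix $\bm R$ are defined from $\succcurlyeq$ and $\bm r$ as below, then $\mathrm{TSD}(\mathbf P_W,\mathbf P_F,\bm R)$ equals the matching matrix of the matching produced by serial dictatorship with ranking $\bm r$ on $\succcurlyeq$.
   Context: Preferences: each worker has a linear order $\succcurlyeq_{w_i}$ on $\overline F=F\cup\{\perp\}$, each firm a linear order $\succcurlyeq_{f_j}$ on $\overline W=W\cup\{\perp\}$ ($\perp$ = unmatched). For $x\in\overline F$, $\mathrm{ord}(x,\succcurlyeq_{w_i})=\#\{x'\in\overline F: x'\succcurlyeq_{w_i}x\}$ (position, $1$ = best); similarly for firms. Serial dictatorship (SD) with ranking $\bm r$: for $k=1,\dots,n+m$, if $r_k$ is not yet matched, $r_k$ is assigned its most preferred option among $\perp$ and the not-yet-matched agents of the other side (that agent, if any, becomes matched with $r_k$). The matching matrix $\bm M\in\{0,1\}^{(n+1)\times(m+1)}$ of a matching has $M_{ij}=1$ iff $w_i$ is matched with $f_j$ ($i\le n,j\le m$), $M_{i,m+1}=1$ iff $w_i$ is unmatched, $M_{n+1,j}=1$ iff $f_j$ is unmatched, $M_{n+1,m+1}=0$, all other entries $0$. Inputs: $\mathbf P_W=[\bm P_{w_1},\dots,\bm P_{w_n}]\in\{0,1\}^{n\times(m+1)\times(m+1)}$ with $(\bm P_{w_i})_{j,k}=1$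 iff ($j\le m$ and $\mathrm{ord}(f_j,\succcurlyeq_{w_i})=k$) or ($j=m+1$ and $\mathrm{ord}(\perp,\succcurlyeq_{w_i})=k$); $\mathbf P_F=[\bm P_{f_1},\dots,\bm P_{f_m}]\in\{0,1\}^{m\times(n+1)\times(n+1)}$ defined analogously with rows indexed by $w_1,\dots,w_n,\perp$; $\bm R\in\{0,1\}^{(n+m)\times(n+m)}$ with $R_{i,k}=1$ iff ($i\le n$ and $r_k=w_i$) or ($i>n$ and $r_k=f_{i-n}$). Subroutine FindCounterpart$(\bm P)$ for $\bm P\in\mathbb R^{p\times q}$: let $c_j=\sum_i P_{ij}$, replace $c$ by its cumulative sum $(\sum_{l\le j}c_l)_j$, apply elementwise $\mathrm{tw}(x)=0$ if $x\le0$, $x$ if $0<x\le1$, $2-x$ if $1<x\le2$, $0$ if $x>2$, and return the column vector $\bm P\bm c^\top\in\mathbb R^{p}$. Masks: for $k\in[n+m]$, $\bm U_W^{(k)}\in\mathbb R^{(m+1)\times(m+1)}$ is $\sum_{r=n+1}^{n+m}R_{r,k}\bm E^{(m+1)}_{r-n}$ and $\bm U_F^{(k)}\in\mathbb R^{(n+1)\times(n+1)}$ is $\sum_{r=1}^nR_{r,k}\bm E^{(n+1)}_r$, where $\bm E^{(s)}_t$ is the $s\times s$ matrix whose $t$-th row is all $-1$ and other entries $0$. TSD: set $\bm M=\bm O_{(n+1)\times(m+1)}$. For $k=1,\dots,n+m$: (1) $\bm d_w=(R_{1,k},\dots,R_{n,k})$, $\bm d_f=(R_{n+1,k},\dots,R_{n+m,k})$;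 (2) $\bm P_w=\sum_i(\bm d_w)_i\bm P_{w_i}$, $\bm P_f=\sum_j(\bm d_f)_j\bm P_{f_j}$ (current tensors); (3) $\bm c_w=$FindCounterpart$(\bm P_w)\in\mathbb R^{m+1}$, $\bm c_f=$FindCounterpart$(\bm P_f)\in\mathbb R^{n+1}$ (as row vectors); (4) $\bm M_w=[\bm d_w\|0]^\top\bm c_w$, $\bm M_f=[\bm d_f\|0]^\top\bm c_f$; (5) $\bm M\leftarrow\bm M+\bm M_w+\bm M_f^\top$; (6) $\bm V_W\in\mathbb R^{(m+1)\times(m+1)}$ has $t$-th row equal to $-(\bm c_w)_t$ times the all-ones row for $t\le m$ and zero row $m+1$; $\bm V_F\in\mathbb R^{(n+1)\times(n+1)}$ analogously from $\bm c_f$; (7) add $\bm U_W^{(k)}+\bm V_W$ to every $\bm P_{w_i}$ and $\bm U_F^{(k)}+\bm V_F$ to every $\bm P_{f_j}$; (8) replace each $\bm P_{w_i}$ by $(1-(\bm c_f)_i)\,\mathrm{ReLU}(\bm P_{w_i})$ and each $\bm P_{f_j}$ by $(1-(\bm c_w)_j)\,\mathrm{ReLU}(\bm P_{f_j})$, with $\mathrm{ReLU}$ elementwise $\max\{x,0\}$. Output $\bm M$. *)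

theory Defs
  imports Main Complex_Main
begin

(* Conventions (1-based indices):
   workers w_1..w_n are indices 1..n; firms f_1..f_m are indices 1..m.
   A worker's preference is a linear order on {1..m+1}, where m+1 stands for \<bottom>;
   a firm's preference is a linear order on {1..n+1}, where n+1 stands for \<bottom>.
   (x,y) \<in> r means x \<succcurlyeq> y.
   Agents of W \<union> F are encoded as 1..n+m: a \<le> n is w_a, a > n is f_(a-n)
   (exactly the row indexing of R). A ranking is a bijection rk of {1..n+m}, r_k = rk k.
   Matrices/tensors are real-valued functions on (1-based) nat indices. *)

definition ord_pos :: "nat set \<Rightarrow> nat rel \<Rightarrow> nat \<Rightarrow> nat" where
  "ord_pos A r x = card {x' \<in> A. (x', x) \<in> r}"

definition best :: "nat rel \<Rightarrow> nat set \<Rightarrow> nat" where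
  "best r S = (THE x. x \<in> S \<and> (\<forall>y\<in>S. (x, y) \<in> r))"

(* state: (set of agents already matched -- including those assigned \<bottom> --,
           set of matched pairs (i,j) meaning w_i matched with f_j) *)
definition sd_step :: "nat \<Rightarrow> nat \<Rightarrow> (nat \<Rightarrow> nat rel) \<Rightarrow> (nat \<Rightarrow> nat rel) \<Rightarrow> nat \<Rightarrow>
    nat set \<times> (nat \<times> nat) set \<Rightarrow> nat set \<times> (nat \<times> nat) set" where
  "sd_step n m prefW prefF a st =
     (let (D, Pairs) = st in
      if a \<in> D then (D, Pairs)
      else if a \<le> n then
        (let b = best (prefW a) ({m+1} \<union> {j \<in> {1..m}. n + j \<notin> D}) in
         if b = m + 1 then (D \<union> {a}, Pairs)
         else (D \<union> {a, n + b}, Pairs \<union> {(a, b)}))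
      else
        (let j = a - n; b = best (prefF j) ({n+1} \<union> {i \<in> {1..n}. i \<notin> D}) in
         if b = n + 1 then (D \<union> {a}, Pairs)
         else (D \<union> {a, b}, Pairs \<union> {(b, j)})))"

primrec sd_run :: "nat \<Rightarrow> nat \<Rightarrow> (nat \<Rightarrow> nat rel) \<Rightarrow> (nat \<Rightarrow> nat rel) \<Rightarrow> (nat \<Rightarrow> nat) \<Rightarrow> nat \<Rightarrow>
    nat set \<times> (nat \<times> nat) set" where
  "sd_run n m prefW prefF rk 0 = ({}, {})"
| "sd_run n m prefW prefF rk (Suc k) = sd_step n m prefW prefF (rk (Suc k)) (sd_run n m prefW prefF rk k)"

definition SD :: "nat \<Rightarrow> nat \<Rightarrow> (nat \<Rightarrow> nat rel) \<Rightarrow> (nat \<Rightarrow> nat rel) \<Rightarrow> (nat \<Rightarrow> nat) \<Rightarrow> (nat \<times> nat) set" where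
  "SD n m prefW prefF rk = snd (sd_run n m prefW prefF rk (n + m))"

definition matching_matrix :: "nat \<Rightarrow> nat \<Rightarrow> (nat \<times> nat) set \<Rightarrow> nat \<Rightarrow> nat \<Rightarrow> real" where
  "matching_matrix n m Pairs i j =
     (if 1 \<le> i \<and> i \<le> n \<and> 1 \<le> j \<and> j \<le> m then (if (i, j) \<in> Pairs then 1 else 0)
      else if 1 \<le> i \<and> i \<le> n \<and> j = m + 1 then (if (\<forall>j'. (i, j') \<notin> Pairs) then 1 else 0)
      else if i = n + 1 \<and> 1 \<le> j \<and> j \<le> m then (if (\<forall>i'. (i', j) \<notin> Pairs) then 1 else 0)
      else 0)"

definition PW_tensor :: "nat \<Rightarrow> (nat \<Rightarrow> nat rel) \<Rightarrow> nat \<Rightarrow> nat \<Rightarrow> nat \<Rightarrow> real" where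
  "PW_tensor m prefW i j k = (if ord_pos {1..m+1} (prefW i) j = k then 1 else 0)"

definition PF_tensor :: "nat \<Rightarrow> (nat \<Rightarrow> nat rel) \<Rightarrow> nat \<Rightarrow> nat \<Rightarrow> nat \<Rightarrow> real" where
  "PF_tensor n prefF j i k = (if ord_pos {1..n+1} (prefF j) i = k then 1 else 0)"

definition R_matrix :: "(nat \<Rightarrow> nat) \<Rightarrow> nat \<Rightarrow> nat \<Rightarrow> real" where
  "R_matrix rk i k = (if rk k = i then 1 else 0)"

definition tw :: "real \<Rightarrow> real" where
  "tw x = (if x \<le> 0 then 0 else if x \<le> 1 then x else if x \<le> 2 then 2 - x else 0)"

definition find_counterpart :: "nat \<Rightarrow> nat \<Rightarrow> (nat \<Rightarrow> nat \<Rightarrow> real) \<Rightarrow> nat \<Rightarrow> real" where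
  "find_counterpart p q P =
     (let c = (\<lambda>j. \<Sum>i = 1..p. P i j);
          cs = (\<lambda>j. \<Sum>l = 1..j. c l);
          c' = (\<lambda>j. tw (cs j))
      in (\<lambda>i. \<Sum>j = 1..q. P i j * c' j))"

definition E_mat :: "nat \<Rightarrow> nat \<Rightarrow> nat \<Rightarrow> real" where
  "E_mat t a b = (if a = t then -1 else 0)"

definition U_W :: "nat \<Rightarrow> nat \<Rightarrow> (nat \<Rightarrow> nat \<Rightarrow> real) \<Rightarrow> nat \<Rightarrow> nat \<Rightarrow> nat \<Rightarrow> real" where
  "U_W n m R k = (\<lambda>a b. \<Sum>r = n+1..n+m. R r k * E_mat (r - n) a b)"

definition U_F :: "nat \<Rightarrow> (nat \<Rightarrow> nat \<Rightarrow> real) \<Rightarrow> nat \<Rightarrow> nat \<Rightarrow> nat \<Rightarrow> real" where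
  "U_F n R k = (\<lambda>a b. \<Sum>r = 1..n. R r k * E_mat r a b)"

type_synonym tsd_state =
  "(nat \<Rightarrow> nat \<Rightarrow> real) \<times> (nat \<Rightarrow> nat \<Rightarrow> nat \<Rightarrow> real) \<times> (nat \<Rightarrow> nat \<Rightarrow> nat \<Rightarrow> real)"

definition tsd_step :: "nat \<Rightarrow> nat \<Rightarrow> (nat \<Rightarrow> nat \<Rightarrow> real) \<Rightarrow> nat \<Rightarrow> tsd_state \<Rightarrow> tsd_state" where
  "tsd_step n m R k st =
     (let (M, PWs, PFs) = st;
          dw = (\<lambda>i. R i k);
          df = (\<lambda>j. R (n + j) k);
          Pw = (\<lambda>a b. \<Sum>i = 1..n. dw i * PWs i a b);
          Pf = (\<lambda>a b. \<Sum>j = 1..m. df j * PFs j a b);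
          cw = find_counterpart (m+1) (m+1) Pw;
          cf = find_counterpart (n+1) (n+1) Pf;
          Mw = (\<lambda>a b. (if a \<le> n then dw a else 0) * cw b);
          Mf = (\<lambda>a b. (if a \<le> m then df a else 0) * cf b);
          M' = (\<lambda>a b. M a b + Mw a b + Mf b a);
          VW = (\<lambda>t s. if t \<le> m then - cw t else 0);
          VF = (\<lambda>t s. if t \<le> n then - cf t else 0);
          UW = U_W n m R k;
          UF = U_F n R k;
          PWs' = (\<lambda>i a b. (1 - cf i) * max (PWs i a b + UW a b + VW a b) 0);
          PFs' = (\<lambda>j a b. (1 - cw j) * max (PFs j a b + UF a b + VF a b) 0)
      in (M', PWs', PFs'))"

primrec tsd_run :: "nat \<Rightarrow> nat \<Rightarrow> (nat \<Rightarrow> nat \<Rightarrow> nat \<Rightarrow> real) \<Rightarrow> (nat \<Rightarrow> nat \<Rightarrow> nat \<Rightarrow> real)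
    \<Rightarrow> (nat \<Rightarrow> nat \<Rightarrow> real) \<Rightarrow> nat \<Rightarrow> tsd_state" where
  "tsd_run n m PW PF R 0 = ((\<lambda>a b. 0), PW, PF)"
| "tsd_run n m PW PF R (Suc k) = tsd_step n m R (Suc k) (tsd_run n m PW PF R k)"

definition TSD :: "nat \<Rightarrow> nat \<Rightarrow> (nat \<Rightarrow> nat \<Rightarrow> nat \<Rightarrow> real) \<Rightarrow> (nat \<Rightarrow> nat \<Rightarrow> nat \<Rightarrow> real)
    \<Rightarrow> (nat \<Rightarrow> nat \<Rightarrow> real) \<Rightarrow> nat \<Rightarrow> nat \<Rightarrow> real" where
  "TSD n m PW PF R = fst (tsd_run n m PW PF R (n + m))"

end

theory Submission
  imports Defs
begin


lemma best_exists:
  assumes lo: "linear_order_on A r" and fin: "finite S" and ne: "S \<noteq> {}" and sub: "S \<subseteq> A"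
  shows "\<exists>x\<in>S. \<forall>y\<in>S. (x, y) \<in> r"
  using fin ne sub
proof (induction S rule: finite_ne_induct)
  case (singleton x)
  then show ?case using lo by (auto simp: linear_order_on_def partial_order_on_def preorder_on_def refl_on_def)
next
  case (insert x F)
  then obtain z where z: "z \<in> F" "\<forall>y\<in>F. (z, y) \<in> r" by auto
  have tr: "trans r" and tot: "total_on A r" and rf: "refl_on A r"
    using lo by (auto simp: linear_order_on_def partial_order_on_def preorder_on_def)
  show ?case
  proof (cases "(x, z) \<in> r")
    case True
    then show ?thesis using z tr rf insert.prems by (auto dest: transD simp: refl_on_def)
  next
    case False
    have "x \<noteq> z" "x \<in> A" "z \<in> A" using insert z(1) by auto
    then have "(z, x) \<in> r" using tot False
      unfolding total_on_def by blast
    then show ?thesis using z by auto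
  qed
qed

lemma best_prop:
  assumes lo: "linear_order_on A r" and fin: "finite S" and ne: "S \<noteq> {}" and sub: "S \<subseteq> A"
  shows "best r S \<in> S \<and> (\<forall>y\<in>S. (best r S, y) \<in> r)"
proof -
  obtain x where x: "x \<in> S" "\<forall>y\<in>S. (x, y) \<in> r" using best_exists[OF assms] by blast
  have as: "antisym r" using lo by (auto simp: linear_order_on_def partial_order_on_def)
  have "best r S = x" unfolding best_def
    apply (rule the_equality)
    using x apply blast
    using x as by (auto dest: antisymD)
  then show ?thesis using x by simp
qed

lemma ord_pos_mono:
  assumes lo: "linear_order_on A r" and fin: "finite A" and xy: "(x, y) \<in> r"
  shows "ord_pos A r x \<le> ord_pos A r y"
proof -
  have tr: "trans r" using lo by (auto simp: linear_order_on_def partial_order_on_def preorder_on_def)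
  have "{x' \<in> A. (x', x) \<in> r} \<subseteq> {x' \<in> A. (x', y) \<in> r}" using xy tr by (auto dest: transD)
  then show ?thesis unfolding ord_pos_def using fin by (simp add: card_mono)
qed

lemma ord_pos_inj:
  assumes lo: "linear_order_on A r" and fin: "finite A"
  shows "inj_on (ord_pos A r) A"
proof (rule inj_onI)
  fix x y assume x: "x \<in> A" and y: "y \<in> A" and eq: "ord_pos A r x = ord_pos A r y"
  have tr: "trans r" and tot: "total_on A r" and rf: "refl_on A r" and as: "antisym r"
    using lo by (auto simp: linear_order_on_def partial_order_on_def preorder_on_def)
  have key: "u = v" if u: "u \<in> A" and v: "v \<in> A" and uv: "(u, v) \<in> r" and e: "ord_pos A r u = ord_pos A r v" for u v
  proof -
    have sub: "{x' \<in> A. (x', u) \<in> r} \<subseteq> {x' \<in> A. (x', v) \<in> r}" using uv tr by (auto dest: transD)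
    have "{x' \<in> A. (x', u) \<in> r} = {x' \<in> A. (x', v) \<in> r}"
      using card_subset_eq[OF _ sub] fin e unfolding ord_pos_def by auto
    moreover have "v \<in> {x' \<in> A. (x', v) \<in> r}" using v rf by (auto simp: refl_on_def)
    ultimately have "(v, u) \<in> r" by auto
    then show ?thesis using uv as by (auto dest: antisymD)
  qed
  show "x = y"
  proof (cases "x = y")
    case False
    then have "(x, y) \<in> r \<or> (y, x) \<in> r" using tot x y by (auto simp: total_on_def)
    then show ?thesis using key x y eq by metis
  qed
qed

lemma ord_pos_range:
  assumes lo: "linear_order_on A r" and fin: "finite A" and x: "x \<in> A"
  shows "1 \<le> ord_pos A r x \<and> ord_pos A r x \<le> card A"
proof -
  have rf: "refl_on A r" using lo by (auto simp: linear_order_on_def partial_order_on_def preorder_on_def)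
  have "x \<in> {x' \<in> A. (x', x) \<in> r}" using x rf by (auto simp: refl_on_def)
  then have "card {x' \<in> A. (x', x) \<in> r} \<ge> 1" using fin
    by (metis (no_types, lifting) One_nat_def Suc_leI card_gt_0_iff empty_iff finite_subset mem_Collect_eq subsetI)
  moreover have "card {x' \<in> A. (x', x) \<in> r} \<le> card A" using fin by (simp add: card_mono)
  ultimately show ?thesis unfolding ord_pos_def by simp
qed



lemma tw_one: "tw 1 = 1" by (simp add: tw_def)
lemma tw_ge2: "x \<ge> 2 \<Longrightarrow> tw x = 0" by (simp add: tw_def)

lemma fc_zero:
  assumes "\<forall>x\<in>{1..N}. \<forall>y\<in>{1..N}. P x y = 0" and "x \<in> {1..N}"
  shows "find_counterpart N N P x = 0"
  using assms unfolding find_counterpart_def Let_def by simp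

lemma fc_ind:
  fixes P :: "nat \<Rightarrow> nat \<Rightarrow> real"
  assumes S: "S \<subseteq> {1..N}" and inj: "inj_on pos S" and rng: "\<forall>x\<in>S. pos x \<in> {1..N}"
    and s: "s \<in> S" and smin: "\<forall>x\<in>S. pos s \<le> pos x"
    and P: "\<forall>x\<in>{1..N}. \<forall>y\<in>{1..N}. P x y = (if x \<in> S \<and> pos x = y then 1 else 0)"
    and x: "x \<in> {1..N}"
  shows "find_counterpart N N P x = (if x = s then 1 else 0)"
proof -
  define c' where "c' = (\<lambda>j. tw (\<Sum>l = 1..j. \<Sum>i = 1..N. P i l))"
  have fc: "find_counterpart N N P x = (\<Sum>j = 1..N. P x j * c' j)"
    unfolding find_counterpart_def Let_def c'_def by simp
  have finS: "finite S" using S finite_subset by blast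
  have cs: "(\<Sum>l = 1..y. \<Sum>i = 1..N. P i l) = (\<Sum>i\<in>S. if pos i \<le> y then 1 else 0)" if y: "y \<le> N" for y
  proof -
    have "(\<Sum>l = 1..y. \<Sum>i = 1..N. P i l) = (\<Sum>l = 1..y. \<Sum>i = 1..N. (if i \<in> S \<and> pos i = l then 1 else 0))"
      using P y by (intro sum.cong) auto
    also have "\<dots> = (\<Sum>i = 1..N. \<Sum>l = 1..y. (if i \<in> S \<and> pos i = l then 1 else 0))"
      by (rule sum.swap)
    also have "\<dots> = (\<Sum>i = 1..N. (if i \<in> S \<and> pos i \<le> y then 1 else 0))"
    proof (intro sum.cong refl)
      fix i assume "i \<in> {1..N}"
      show "(\<Sum>l = 1..y. (if i \<in> S \<and> pos i = l then 1 else 0)) = (if i \<in> S \<and> pos i \<le> y then (1::real) else 0)"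
        using rng by (cases "i \<in> S") (auto simp: sum.delta')
    qed
    also have "\<dots> = (\<Sum>i\<in>S. if pos i \<le> y then 1 else 0)"
    proof -
      have "(\<Sum>i = 1..N. (if i \<in> S \<and> pos i \<le> y then (1::real) else 0)) = (\<Sum>i\<in>{1..N} \<inter> S. if pos i \<le> y then 1 else 0)"
        by (subst sum.inter_restrict) (auto intro: sum.cong)
      also have "{1..N} \<inter> S = S" using S by auto
      finally show ?thesis .
    qed
    finally show ?thesis .
  qed
  show ?thesis
  proof (cases "x \<in> S")
    case False
    then have "x \<noteq> s" using s by auto
    moreover have "(\<Sum>j = 1..N. P x j * c' j) = 0" using P x False by simp
    ultimately show ?thesis using fc by simp
  next
    case True
    have px: "pos x \<in> {1..N}" using rng True by auto
    have "(\<Sum>j = 1..N. P x j * c' j) = (\<Sum>j = 1..N. if j = pos x then c' j else 0)"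
      using P x True by (intro sum.cong) auto
    also have "\<dots> = c' (pos x)" using px by (simp add: sum.delta')
    also have "\<dots> = tw (\<Sum>i\<in>S. if pos i \<le> pos x then 1 else 0)"
      unfolding c'_def using cs px by simp
    also have "\<dots> = (if x = s then 1 else 0)"
    proof (cases "x = s")
      case True
      have "(\<Sum>i\<in>S. if pos i \<le> pos x then (1::real) else 0) = (\<Sum>i\<in>S. if i = s then 1 else 0)"
      proof (intro sum.cong refl)
        fix i assume i: "i \<in> S"
        have "pos i \<le> pos s \<longleftrightarrow> i = s" using smin i s inj by (metis inj_on_eq_iff le_antisym order_refl)
        then show "(if pos i \<le> pos x then (1::real) else 0) = (if i = s then 1 else 0)" using True by simp
      qed
      also have "\<dots> = 1" using s finS by (simp add: sum.delta)
      finally show ?thesis using True tw_one by simp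
    next
      case False
      have "(\<Sum>i\<in>{s, x}. if pos i \<le> pos x then (1::real) else 0) \<le> (\<Sum>i\<in>S. if pos i \<le> pos x then 1 else 0)"
        using s \<open>x \<in> S\<close> finS by (intro sum_mono2) auto
      moreover have "(\<Sum>i\<in>{s, x}. if pos i \<le> pos x then (1::real) else 0) = 2"
        using False smin \<open>x \<in> S\<close> by simp
      ultimately show ?thesis using False tw_ge2 by simp
    qed
    finally show ?thesis using fc by simp
  qed
qed



definition cwv :: "nat \<Rightarrow> nat \<Rightarrow> (nat \<Rightarrow> nat \<Rightarrow> real) \<Rightarrow> nat \<Rightarrow> (nat \<Rightarrow> nat \<Rightarrow> nat \<Rightarrow> real) \<Rightarrow> nat \<Rightarrow> real" where
  "cwv n m R k PWs = find_counterpart (m+1) (m+1) (\<lambda>a b. \<Sum>i = 1..n. R i k * PWs i a b)"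
definition cfv :: "nat \<Rightarrow> nat \<Rightarrow> (nat \<Rightarrow> nat \<Rightarrow> real) \<Rightarrow> nat \<Rightarrow> (nat \<Rightarrow> nat \<Rightarrow> nat \<Rightarrow> real) \<Rightarrow> nat \<Rightarrow> real" where
  "cfv n m R k PFs = find_counterpart (n+1) (n+1) (\<lambda>a b. \<Sum>j = 1..m. R (n + j) k * PFs j a b)"

lemma tsd_step_simp:
  "tsd_step n m R k (M, PWs, PFs) =
    ((\<lambda>a b. M a b + (if a \<le> n then R a k else 0) * cwv n m R k PWs b
                   + (if b \<le> m then R (n + b) k else 0) * cfv n m R k PFs a),
     (\<lambda>i a b. (1 - cfv n m R k PFs i) * max (PWs i a b + U_W n m R k a b + (if a \<le> m then - cwv n m R k PWs a else 0)) 0),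
     (\<lambda>j a b. (1 - cwv n m R k PWs j) * max (PFs j a b + U_F n R k a b + (if a \<le> n then - cfv n m R k PFs a else 0)) 0))"
  unfolding tsd_step_def Let_def cwv_def cfv_def by simp

lemma sumR_W: "(\<Sum>i = 1..n. R_matrix rk i k * X i) = (if rk k \<in> {1..n} then X (rk k) else 0)"
proof -
  have "(\<Sum>i = 1..n. R_matrix rk i k * X i) = (\<Sum>i = 1..n. if rk k = i then X i else 0)"
    unfolding R_matrix_def by (intro sum.cong) auto
  also have "\<dots> = (if rk k \<in> {1..n} then X (rk k) else 0)" by (rule sum.delta'[OF finite_atLeastAtMost])
  finally show ?thesis .
qed

lemma sumR_F: "(\<Sum>j = 1..m. R_matrix rk (n + j) k * X j) = (if rk k \<in> {n+1..n+m} then X (rk k - n) else 0)"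
proof -
  have "(\<Sum>j = 1..m. R_matrix rk (n + j) k * X j) = (\<Sum>j = 1..m. if j = rk k - n \<and> rk k > n then X j else 0)"
    unfolding R_matrix_def by (intro sum.cong) auto
  also have "\<dots> = (if rk k \<in> {n+1..n+m} then X (rk k - n) else 0)"
    by (cases "rk k > n") (auto simp: sum.delta')
  finally show ?thesis .
qed

lemma UW_eq: "U_W n m (R_matrix rk) k a b = (if rk k \<in> {n+1..n+m} \<and> a = rk k - n then -1 else 0)"
proof -
  have "U_W n m (R_matrix rk) k a b = (\<Sum>r = n+1..n+m. if r = rk k then E_mat (r - n) a b else 0)"
    unfolding U_W_def R_matrix_def by (intro sum.cong) auto
  also have "\<dots> = (if rk k \<in> {n+1..n+m} then E_mat (rk k - n) a b else 0)"
    by (simp add: sum.delta')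
  finally show ?thesis by (simp add: E_mat_def)
qed

lemma UF_eq: "U_F n (R_matrix rk) k a b = (if rk k \<in> {1..n} \<and> a = rk k then -1 else 0)"
proof -
  have "U_F n (R_matrix rk) k a b = (\<Sum>r = 1..n. if r = rk k then E_mat r a b else 0)"
    unfolding U_F_def R_matrix_def by (intro sum.cong) auto
  also have "\<dots> = (if rk k \<in> {1..n} then E_mat (rk k) a b else 0)"
    by (simp add: sum.delta')
  finally show ?thesis by (simp add: E_mat_def)
qed

lemma cwv_eq: "cwv n m (R_matrix rk) k PWs = find_counterpart (m+1) (m+1) (\<lambda>a b. if rk k \<in> {1..n} then PWs (rk k) a b else 0)"
  unfolding cwv_def sumR_W ..
lemma cfv_eq: "cfv n m (R_matrix rk) k PFs = find_counterpart (n+1) (n+1) (\<lambda>a b. if rk k \<in> {n+1..n+m} then PFs (rk k - n) a b else 0)"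
  unfolding cfv_def sumR_F ..



definition Mpart :: "nat \<Rightarrow> nat \<Rightarrow> nat set \<Rightarrow> (nat \<times> nat) set \<Rightarrow> nat \<Rightarrow> nat \<Rightarrow> real" where
  "Mpart n m D Q i j =
    (if i \<le> n \<and> j \<le> m then (if (i, j) \<in> Q then 1 else 0)
     else if i \<le> n \<and> j = m + 1 then (if i \<in> D \<and> (\<forall>j'. (i, j') \<notin> Q) then 1 else 0)
     else if i = n + 1 \<and> j \<le> m then (if n + j \<in> D \<and> (\<forall>i'. (i', j) \<notin> Q) then 1 else 0)
     else 0)"

definition tsd_inv :: "nat \<Rightarrow> nat \<Rightarrow> (nat \<Rightarrow> nat \<Rightarrow> nat \<Rightarrow> real) \<Rightarrow> (nat \<Rightarrow> nat \<Rightarrow> nat \<Rightarrow> real) \<Rightarrow> nat set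
   \<Rightarrow> nat set \<Rightarrow> (nat \<times> nat) set \<Rightarrow> (nat \<Rightarrow> nat \<Rightarrow> real) \<Rightarrow> (nat \<Rightarrow> nat \<Rightarrow> nat \<Rightarrow> real) \<Rightarrow> (nat \<Rightarrow> nat \<Rightarrow> nat \<Rightarrow> real) \<Rightarrow> bool" where
  "tsd_inv n m PW0 PF0 K D Q M PWs PFs \<longleftrightarrow>
     D \<subseteq> {1..n+m} \<and> K \<subseteq> D \<and> Q \<subseteq> {1..n} \<times> {1..m} \<and> (\<forall>(i, j)\<in>Q. i \<in> D \<and> n + j \<in> D) \<and>
     (\<forall>i\<in>{1..n}. i \<notin> K \<longrightarrow> (\<forall>x\<in>{1..m+1}. \<forall>y\<in>{1..m+1}.
         PWs i x y = (if i \<in> D then 0 else if x = m + 1 \<or> n + x \<notin> D then PW0 i x y else 0))) \<and>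
     (\<forall>j\<in>{1..m}. n + j \<notin> K \<longrightarrow> (\<forall>x\<in>{1..n+1}. \<forall>y\<in>{1..n+1}.
         PFs j x y = (if n + j \<in> D then 0 else if x = n + 1 \<or> x \<notin> D then PF0 j x y else 0))) \<and>
     (\<forall>i\<in>{1..n+1}. \<forall>j\<in>{1..m+1}. M i j = Mpart n m D Q i j)"

lemma worker_step:
  assumes I: "tsd_inv n m (PW_tensor m prefW) (PF_tensor n prefF) K D Q M PWs PFs"
    and lo: "linear_order_on {1..m+1} (prefW a)"
    and rk: "rk k = a" and a: "a \<in> {1..n}" and aK: "a \<notin> K" and aD: "a \<notin> D"
  shows "case tsd_step n m (R_matrix rk) k (M, PWs, PFs) of (M', PWs', PFs') \<Rightarrow>
         case sd_step n m prefW prefF a (D, Q) of (D', Q') \<Rightarrow>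
         tsd_inv n m (PW_tensor m prefW) (PF_tensor n prefF) (insert a K) D' Q' M' PWs' PFs'"
proof -
  define S where "S = {m+1} \<union> {j \<in> {1..m}. n + j \<notin> D}"
  define b where "b = best (prefW a) S"
  define pos where "pos = ord_pos {1..m+1} (prefW a)"
  have S1: "S \<subseteq> {1..m+1}" unfolding S_def by auto
  have bp: "b \<in> S \<and> (\<forall>y\<in>S. (b, y) \<in> prefW a)" unfolding b_def
    by (rule best_prop[OF lo]) (use S1 finite_subset in \<open>auto simp: S_def\<close>)
  have sd: "sd_step n m prefW prefF a (D, Q) = (if b = m + 1 then (D \<union> {a}, Q) else (D \<union> {a, n + b}, Q \<union> {(a, b)}))"
    using aD a unfolding sd_step_def Let_def b_def S_def by auto
  have cw: "cwv n m (R_matrix rk) k PWs x = (if x = b then 1 else 0)" if x: "x \<in> {1..m+1}" for x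
  proof -
    have "cwv n m (R_matrix rk) k PWs x = find_counterpart (m+1) (m+1) (PWs a) x"
      unfolding cwv_eq using rk a by simp
    also have "\<dots> = (if x = b then 1 else 0)"
    proof (rule fc_ind[where S = S and pos = pos])
      show "S \<subseteq> {1..m+1}" by (rule S1)
      show "inj_on pos S" unfolding pos_def using ord_pos_inj[OF lo] S1 inj_on_subset by blast
      show "\<forall>x\<in>S. pos x \<in> {1..m+1}" unfolding pos_def using ord_pos_range[OF lo] S1 by fastforce
      show "b \<in> S" using bp by blast
      show "\<forall>x\<in>S. pos b \<le> pos x" unfolding pos_def using ord_pos_mono[OF lo] bp by blast
      show "\<forall>x\<in>{1..m+1}. \<forall>y\<in>{1..m+1}. PWs a x y = (if x \<in> S \<and> pos x = y then 1 else 0)"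
        using I a aK aD unfolding tsd_inv_def S_def pos_def PW_tensor_def by auto
      show "x \<in> {1..m+1}" by (rule x)
    qed
    finally show ?thesis .
  qed
  have cf: "cfv n m (R_matrix rk) k PFs x = 0" if x: "x \<in> {1..n+1}" for x
    unfolding cfv_eq using rk a x by (auto intro: fc_zero)
  have bS: "b \<in> {1..m+1}" "b = m + 1 \<or> (b \<le> m \<and> n + b \<notin> D)" using bp S1 unfolding S_def by auto
  have UW0: "U_W n m (R_matrix rk) k x y = 0" for x y using rk a by (simp add: UW_eq)
  have UF: "U_F n (R_matrix rk) k x y = (if x = a then -1 else 0)" for x y using rk a by (simp add: UF_eq)
  have Rw: "R_matrix rk i k = (if i = a then 1 else 0)" for i using rk by (auto simp: R_matrix_def)
  have Rf: "R_matrix rk (n + j) k = 0" if "j \<ge> 1" for j using rk a that by (auto simp: R_matrix_def)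
  have noQa: "\<forall>j. (a, j) \<notin> Q" using I aD unfolding tsd_inv_def by auto
  have I': "D \<subseteq> {1..n+m}" "K \<subseteq> D" "Q \<subseteq> {1..n} \<times> {1..m}" "\<forall>(i, j)\<in>Q. i \<in> D \<and> n + j \<in> D"
     "\<forall>i\<in>{1..n}. i \<notin> K \<longrightarrow> (\<forall>x\<in>{1..m+1}. \<forall>y\<in>{1..m+1}.
         PWs i x y = (if i \<in> D then 0 else if x = m + 1 \<or> n + x \<notin> D then PW_tensor m prefW i x y else 0))"
     "\<forall>j\<in>{1..m}. n + j \<notin> K \<longrightarrow> (\<forall>x\<in>{1..n+1}. \<forall>y\<in>{1..n+1}.
         PFs j x y = (if n + j \<in> D then 0 else if x = n + 1 \<or> x \<notin> D then PF_tensor n prefF j x y else 0))"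
     "\<forall>i\<in>{1..n+1}. \<forall>j\<in>{1..m+1}. M i j = Mpart n m D Q i j"
    using I unfolding tsd_inv_def by auto
  show ?thesis
  proof (cases "b = m + 1")
    case True
    have sd': "sd_step n m prefW prefF a (D, Q) = (D \<union> {a}, Q)" using sd True by simp
    show ?thesis unfolding tsd_step_simp sd' prod.case tsd_inv_def
      apply (intro conjI)
      using I' a apply auto[4]
      subgoal using I' a aD bS by (auto simp: cw cf UW0 PW_tensor_def True)
      subgoal using I' a aD bS by (auto simp: cw cf UF PF_tensor_def True)
      subgoal using I' a aD bS noQa by (auto simp: cw cf Rw Rf Mpart_def True)
      done
  next
    case False
    have sd': "sd_step n m prefW prefF a (D, Q) = (D \<union> {a, n + b}, Q \<union> {(a, b)})" using sd False by simp
    show ?thesis unfolding tsd_step_simp sd' prod.case tsd_inv_def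
      apply (intro conjI)
      using I' a bS False apply auto[4]
      subgoal using I' a aD bS False by (auto simp: cw cf UW0 PW_tensor_def)
      subgoal using I' a aD bS False by (auto simp: cw cf UF PF_tensor_def)
      subgoal using I' a aD bS False noQa by (auto simp: cw cf Rw Rf Mpart_def)
      done
  qed
qed


lemma firm_step:
  assumes I: "tsd_inv n m (PW_tensor m prefW) (PF_tensor n prefF) K D Q M PWs PFs"
    and lo: "linear_order_on {1..n+1} (prefF (a - n))"
    and rk: "rk k = a" and a: "a \<in> {n+1..n+m}" and aK: "a \<notin> K" and aD: "a \<notin> D"
  shows "case tsd_step n m (R_matrix rk) k (M, PWs, PFs) of (M', PWs', PFs') \<Rightarrow>
         case sd_step n m prefW prefF a (D, Q) of (D', Q') \<Rightarrow>
         tsd_inv n m (PW_tensor m prefW) (PF_tensor n prefF) (insert a K) D' Q' M' PWs' PFs'"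
proof -
  define j0 where "j0 = a - n"
  have a0: "a = n + j0" "j0 \<in> {1..m}" using a unfolding j0_def by auto
  define S where "S = {n+1} \<union> {i \<in> {1..n}. i \<notin> D}"
  define b where "b = best (prefF j0) S"
  define pos where "pos = ord_pos {1..n+1} (prefF j0)"
  have lo': "linear_order_on {1..n+1} (prefF j0)" using lo unfolding j0_def .
  have S1: "S \<subseteq> {1..n+1}" unfolding S_def by auto
  have bp: "b \<in> S \<and> (\<forall>y\<in>S. (b, y) \<in> prefF j0)" unfolding b_def
    by (rule best_prop[OF lo']) (use S1 finite_subset in \<open>auto simp: S_def\<close>)
  have sd: "sd_step n m prefW prefF a (D, Q) = (if b = n + 1 then (D \<union> {a}, Q) else (D \<union> {a, b}, Q \<union> {(b, j0)}))"
    using aD a unfolding sd_step_def Let_def b_def S_def j0_def by auto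
  have cf: "cfv n m (R_matrix rk) k PFs x = (if x = b then 1 else 0)" if x: "x \<in> {1..n+1}" for x
  proof -
    have "cfv n m (R_matrix rk) k PFs x = find_counterpart (n+1) (n+1) (PFs j0) x"
      unfolding cfv_eq using rk a j0_def by simp
    also have "\<dots> = (if x = b then 1 else 0)"
    proof (rule fc_ind[where S = S and pos = pos])
      show "S \<subseteq> {1..n+1}" by (rule S1)
      show "inj_on pos S" unfolding pos_def using ord_pos_inj[OF lo'] S1 inj_on_subset by blast
      show "\<forall>x\<in>S. pos x \<in> {1..n+1}" unfolding pos_def using ord_pos_range[OF lo'] S1 by fastforce
      show "b \<in> S" using bp by blast
      show "\<forall>x\<in>S. pos b \<le> pos x" unfolding pos_def using ord_pos_mono[OF lo'] bp by blast
      show "\<forall>x\<in>{1..n+1}. \<forall>y\<in>{1..n+1}. PFs j0 x y = (if x \<in> S \<and> pos x = y then 1 else 0)"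
        using I a0 aK aD unfolding tsd_inv_def S_def pos_def PF_tensor_def by auto
      show "x \<in> {1..n+1}" by (rule x)
    qed
    finally show ?thesis .
  qed
  have cw: "cwv n m (R_matrix rk) k PWs x = 0" if x: "x \<in> {1..m+1}" for x
    unfolding cwv_eq using rk a x by (auto intro: fc_zero)
  have bS: "b \<in> {1..n+1}" "b = n + 1 \<or> (b \<le> n \<and> b \<notin> D)" using bp S1 unfolding S_def by auto
  have UF0: "U_F n (R_matrix rk) k x y = 0" for x y using rk a by (simp add: UF_eq)
  have UW: "U_W n m (R_matrix rk) k x y = (if x = j0 then -1 else 0)" for x y using rk a j0_def by (simp add: UW_eq)
  have Rw: "R_matrix rk i k = 0" if "i \<le> n" for i using rk a that by (auto simp: R_matrix_def)
  have Rf: "R_matrix rk (n + j) k = (if j = j0 then 1 else 0)" for j using rk a0 by (auto simp: R_matrix_def)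
  have I': "D \<subseteq> {1..n+m}" "K \<subseteq> D" "Q \<subseteq> {1..n} \<times> {1..m}" "\<forall>(i, j)\<in>Q. i \<in> D \<and> n + j \<in> D"
     "\<forall>i\<in>{1..n}. i \<notin> K \<longrightarrow> (\<forall>x\<in>{1..m+1}. \<forall>y\<in>{1..m+1}.
         PWs i x y = (if i \<in> D then 0 else if x = m + 1 \<or> n + x \<notin> D then PW_tensor m prefW i x y else 0))"
     "\<forall>j\<in>{1..m}. n + j \<notin> K \<longrightarrow> (\<forall>x\<in>{1..n+1}. \<forall>y\<in>{1..n+1}.
         PFs j x y = (if n + j \<in> D then 0 else if x = n + 1 \<or> x \<notin> D then PF_tensor n prefF j x y else 0))"
     "\<forall>i\<in>{1..n+1}. \<forall>j\<in>{1..m+1}. M i j = Mpart n m D Q i j"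
    using I unfolding tsd_inv_def by auto
  have noQ: "\<forall>i. (i, j0) \<notin> Q" using I' aD a0 by auto
  show ?thesis
  proof (cases "b = n + 1")
    case True
    have sd': "sd_step n m prefW prefF a (D, Q) = (D \<union> {a}, Q)" using sd True by simp
    show ?thesis unfolding tsd_step_simp sd' prod.case tsd_inv_def
      apply (intro conjI)
      using I' a apply auto[4]
      subgoal using I' a0 aD bS True by (auto simp: cw cf UW PW_tensor_def)
      subgoal using I' a0 aD bS True by (auto simp: cw cf UF0 PF_tensor_def)
      subgoal using I' a0 aD bS True noQ by (auto simp: cw cf Rw Rf Mpart_def)
      done
  next
    case False
    have sd': "sd_step n m prefW prefF a (D, Q) = (D \<union> {a, b}, Q \<union> {(b, j0)})" using sd False by simp
    show ?thesis unfolding tsd_step_simp sd' prod.case tsd_inv_def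
      apply (intro conjI)
      using I' a a0 bS False apply auto[4]
      subgoal using I' a0 aD bS False by (auto simp: cw cf UW PW_tensor_def)
      subgoal using I' a0 aD bS False by (auto simp: cw cf UF0 PF_tensor_def)
      subgoal using I' a0 aD bS False noQ by (auto simp: cw cf Rw Rf Mpart_def)
      done
  qed
qed

lemma passive_step:
  assumes I: "tsd_inv n m (PW_tensor m prefW) (PF_tensor n prefF) K D Q M PWs PFs"
    and rk: "rk k = a" and a: "a \<in> {1..n+m}" and aK: "a \<notin> K" and aD: "a \<in> D"
  shows "case tsd_step n m (R_matrix rk) k (M, PWs, PFs) of (M', PWs', PFs') \<Rightarrow>
         case sd_step n m prefW prefF a (D, Q) of (D', Q') \<Rightarrow>
         tsd_inv n m (PW_tensor m prefW) (PF_tensor n prefF) (insert a K) D' Q' M' PWs' PFs'"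
proof -
  have sd: "sd_step n m prefW prefF a (D, Q) = (D, Q)" using aD unfolding sd_step_def by simp
  have I': "D \<subseteq> {1..n+m}" "K \<subseteq> D" "Q \<subseteq> {1..n} \<times> {1..m}" "\<forall>(i, j)\<in>Q. i \<in> D \<and> n + j \<in> D"
     "\<forall>i\<in>{1..n}. i \<notin> K \<longrightarrow> (\<forall>x\<in>{1..m+1}. \<forall>y\<in>{1..m+1}.
         PWs i x y = (if i \<in> D then 0 else if x = m + 1 \<or> n + x \<notin> D then PW_tensor m prefW i x y else 0))"
     "\<forall>j\<in>{1..m}. n + j \<notin> K \<longrightarrow> (\<forall>x\<in>{1..n+1}. \<forall>y\<in>{1..n+1}.
         PFs j x y = (if n + j \<in> D then 0 else if x = n + 1 \<or> x \<notin> D then PF_tensor n prefF j x y else 0))"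
     "\<forall>i\<in>{1..n+1}. \<forall>j\<in>{1..m+1}. M i j = Mpart n m D Q i j"
    using I unfolding tsd_inv_def by auto
  have cw: "cwv n m (R_matrix rk) k PWs x = 0" if x: "x \<in> {1..m+1}" for x
    unfolding cwv_eq using rk a x aK aD I' by (auto intro!: fc_zero)
  have cf: "cfv n m (R_matrix rk) k PFs x = 0" if x: "x \<in> {1..n+1}" for x
  proof -
    have "a \<le> n \<or> (a - n \<in> {1..m} \<and> n + (a - n) = a)" using a by auto
    then show ?thesis
      unfolding cfv_eq using rk a x aK aD I' by (auto intro!: fc_zero)
  qed
  have UF: "U_F n (R_matrix rk) k x y = (if a \<le> n \<and> x = a then -1 else 0)" for x y using rk a by (auto simp: UF_eq)
  have UW: "U_W n m (R_matrix rk) k x y = (if a > n \<and> x = a - n then -1 else 0)" for x y using rk a by (auto simp: UW_eq)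
  have Rw: "R_matrix rk i k = (if i = a then 1 else 0)" for i using rk by (auto simp: R_matrix_def)
  show ?thesis unfolding tsd_step_simp sd prod.case tsd_inv_def
    apply (intro conjI)
    using I' a aK aD apply auto[4]
    subgoal using I' a aD by (auto simp: cw cf UW PW_tensor_def)
    subgoal using I' a aD by (auto simp: cw cf UF PF_tensor_def)
    subgoal using I' a aD by (auto simp: cw cf Rw Mpart_def)
    done
qed



lemma run_inv:
  assumes lw: "\<forall>i\<in>{1..n}. linear_order_on {1..m+1} (prefW i)"
    and lf: "\<forall>j\<in>{1..m}. linear_order_on {1..n+1} (prefF j)"
    and bij: "bij_betw rk {1..n+m} {1..n+m}"
  shows "k \<le> n + m \<Longrightarrow> (case tsd_run n m (PW_tensor m prefW) (PF_tensor n prefF) (R_matrix rk) k of (M, PWs, PFs) \<Rightarrow>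
          case sd_run n m prefW prefF rk k of (D, Q) \<Rightarrow>
          tsd_inv n m (PW_tensor m prefW) (PF_tensor n prefF) (rk ` {1..k}) D Q M PWs PFs)"
proof (induction k)
  case 0
  show ?case by (simp add: tsd_inv_def Mpart_def)
next
  case (Suc k)
  obtain M PWs PFs where T: "tsd_run n m (PW_tensor m prefW) (PF_tensor n prefF) (R_matrix rk) k = (M, PWs, PFs)"
    by (metis prod_cases3)
  obtain D Q where S: "sd_run n m prefW prefF rk k = (D, Q)" by (metis prod.exhaust)
  have I: "tsd_inv n m (PW_tensor m prefW) (PF_tensor n prefF) (rk ` {1..k}) D Q M PWs PFs"
    using Suc.IH Suc.prems T S by simp
  define a where "a = rk (Suc k)"
  have inj: "inj_on rk {1..n+m}" and img: "rk ` {1..n+m} = {1..n+m}" using bij unfolding bij_betw_def by auto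
  have sk: "Suc k \<in> {1..n+m}" using Suc.prems by simp
  have a: "a \<in> {1..n+m}" using img sk unfolding a_def by blast
  have aK: "a \<notin> rk ` {1..k}"
  proof
    assume "a \<in> rk ` {1..k}"
    then obtain l where "l \<in> {1..k}" "rk l = rk (Suc k)" unfolding a_def by auto
    moreover have "l \<in> {1..n+m}" using \<open>l \<in> {1..k}\<close> Suc.prems by simp
    ultimately have "l = Suc k" using inj_onD[OF inj _ _ sk] by blast
    then show False using \<open>l \<in> {1..k}\<close> by simp
  qed
  have K: "rk ` {1..Suc k} = insert a (rk ` {1..k})" proof -
    have "{1..Suc k} = insert (Suc k) {1..k}" by auto
    then show ?thesis unfolding a_def by simp
  qed
  have rk: "rk (Suc k) = a" unfolding a_def ..
  have goal: "case tsd_step n m (R_matrix rk) (Suc k) (M, PWs, PFs) of (M', PWs', PFs') \<Rightarrow>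
         case sd_step n m prefW prefF a (D, Q) of (D', Q') \<Rightarrow>
         tsd_inv n m (PW_tensor m prefW) (PF_tensor n prefF) (insert a (rk ` {1..k})) D' Q' M' PWs' PFs'"
  proof (cases "a \<in> D")
    case True
    show ?thesis by (rule passive_step[where n=n and m=m and prefW=prefW and prefF=prefF and rk=rk and k="Suc k", OF I rk a aK True])
  next
    case False
    show ?thesis
    proof (cases "a \<le> n")
      case True
      have l: "linear_order_on {1..m+1} (prefW a)" using lw a True by auto
      have a1: "a \<in> {1..n}" using a True by auto
      show ?thesis by (rule worker_step[where n=n and m=m and prefW=prefW and prefF=prefF and rk=rk and k="Suc k", OF I l rk a1 aK False])
    next
      case nF: False
      have "a - n \<in> {1..m}" using a nF by auto
      then have l: "linear_order_on {1..n+1} (prefF (a - n))" using lf by blast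
      have a1: "a \<in> {n+1..n+m}" using a nF by auto
      show ?thesis by (rule firm_step[where n=n and m=m and prefW=prefW and prefF=prefF and rk=rk and k="Suc k", OF I l rk a1 aK False])
    qed
  qed
  show ?case unfolding K using goal by (simp only: tsd_run.simps sd_run.simps T S rk)
qed


theorem proposition3:
  fixes n m :: nat
    and prefW prefF :: "nat \<Rightarrow> nat rel"
    and rk :: "nat \<Rightarrow> nat"
  assumes "\<forall>i\<in>{1..n}. linear_order_on {1..m+1} (prefW i)"
    and "\<forall>j\<in>{1..m}. linear_order_on {1..n+1} (prefF j)"
    and "bij_betw rk {1..n+m} {1..n+m}"
  shows "\<forall>i\<in>{1..n+1}. \<forall>j\<in>{1..m+1}.
           TSD n m (PW_tensor m prefW) (PF_tensor n prefF) (R_matrix rk) i j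
           = matching_matrix n m (SD n m prefW prefF rk) i j"
proof -
  obtain M PWs PFs where T: "tsd_run n m (PW_tensor m prefW) (PF_tensor n prefF) (R_matrix rk) (n + m) = (M, PWs, PFs)"
    by (metis prod_cases3)
  obtain D Q where S: "sd_run n m prefW prefF rk (n + m) = (D, Q)" by (metis prod.exhaust)
  have I: "tsd_inv n m (PW_tensor m prefW) (PF_tensor n prefF) (rk ` {1..n+m}) D Q M PWs PFs"
    using run_inv[OF assms, of "n + m"] T S by simp
  have img: "rk ` {1..n+m} = {1..n+m}" using assms(3) by (simp add: bij_betw_def)
  have DD: "D = {1..n+m}" using I unfolding tsd_inv_def img by (meson subset_antisym)
  have MM: "\<forall>i\<in>{1..n+1}. \<forall>j\<in>{1..m+1}. M i j = Mpart n m D Q i j" using I unfolding tsd_inv_def by blast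
  show ?thesis
  proof (intro ballI)
    fix i j assume i: "i \<in> {1..n+1}" and j: "j \<in> {1..m+1}"
    have "TSD n m (PW_tensor m prefW) (PF_tensor n prefF) (R_matrix rk) i j = M i j"
      unfolding TSD_def T by simp
    also have "\<dots> = Mpart n m D Q i j" using MM i j by auto
    also have "\<dots> = matching_matrix n m Q i j"
      using i j unfolding Mpart_def matching_matrix_def DD by auto
    also have "Q = SD n m prefW prefF rk" unfolding SD_def S by simp
    finally show "TSD n m (PW_tensor m prefW) (PF_tensor n prefF) (R_matrix rk) i j
           = matching_matrix n m (SD n m prefW prefF rk) i j" .
  qed
qed


end
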